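(* Let $X$ be a real reflexive Banach space and let $\{F_t\}_{t \in T}$ be a non-empty family of convex existence sets in $X$ directed by reverse inclusion, i.e. for any $t_1, t_2 \in T$ there is $t_3 \in T$ with $F_{t_3} \subset F_{t_1} \cap F_{t_2}$. If $F = \bigcap_{t \in T} F_t \neq \emptyset$, then $F$ is an existence set.
   Context: For a non-empty set $F \subset X$ and $x \in X$, let $R_F(x) = \{ d \in F : \|d-c\| \le \|x-c\| \text{ for all } c \in F\}$. A non-empty set $F \subset X$ is an existence set if $R_F(x) \neq \emptyset$ for every $x \in X$. *)

theory Defs
  imports "HOL-Analysis.Analysis"
begin

text \<open>Reflexivity: the canonical embedding of X into its bidual is surjective,
  i.e. every continuous linear functional on the dual X* is evaluation at some x.\<close>
definition reflexive_space :: "'a::real_normed_vector itself \<Rightarrow> bool" where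
  "reflexive_space _ \<longleftrightarrow>
     (\<forall>\<Phi> :: ('a \<Rightarrow>\<^sub>L real) \<Rightarrow>\<^sub>L real. \<exists>x::'a. \<forall>f. blinfun_apply \<Phi> f = blinfun_apply f x)"

definition R_set :: "'a::real_normed_vector set \<Rightarrow> 'a \<Rightarrow> 'a set" where
  "R_set F x = {d \<in> F. \<forall>c\<in>F. norm (d - c) \<le> norm (x - c)}"

definition existence_set :: "'a::real_normed_vector set \<Rightarrow> bool" where
  "existence_set F \<longleftrightarrow> F \<noteq> {} \<and> (\<forall>x. R_set F x \<noteq> {})"

end

theory Submission
  imports Defs
begin


definition goodG :: "('a::real_vector \<Rightarrow> real) \<Rightarrow> ('a \<times> real) set \<Rightarrow> bool" where
  "goodG p G \<longleftrightarrow> (\<forall>x a b. (x,a)\<in>G \<longrightarrow> (x,b)\<in>G \<longrightarrow> a=b) \<and>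
     (\<forall>x a y b. (x,a)\<in>G \<longrightarrow> (y,b)\<in>G \<longrightarrow> (x+y,a+b)\<in>G) \<and>
     (\<forall>x a c. (x,a)\<in>G \<longrightarrow> (c*\<^sub>R x, c*a)\<in>G) \<and>
     (\<forall>x a. (x,a)\<in>G \<longrightarrow> a \<le> p x) \<and> (0,0)\<in>G"

lemma goodG_chain:
  assumes "C \<in> chains {G. goodG p G}" "C \<noteq> {}"
  shows "goodG p (\<Union>C)"
proof -
  have sub: "\<And>G. G \<in> C \<Longrightarrow> goodG p G" and ch: "\<And>G H. G\<in>C \<Longrightarrow> H\<in>C \<Longrightarrow> G \<subseteq> H \<or> H \<subseteq> G"
    using assms(1) unfolding chains_def chain_subset_def by auto
  show ?thesis unfolding goodG_def
  proof (intro conjI allI impI)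
    fix x a b assume "(x,a) \<in> \<Union>C" "(x,b) \<in> \<Union>C"
    then obtain G H where "G\<in>C" "H\<in>C" "(x,a)\<in>G" "(x,b)\<in>H" by auto
    then show "a = b"
    proof (cases "G \<subseteq> H")
      case True then show ?thesis using \<open>(x,a)\<in>G\<close> \<open>(x,b)\<in>H\<close> sub[OF \<open>H\<in>C\<close>] unfolding goodG_def by blast
    next
      case False then have "H \<subseteq> G" using ch[OF \<open>G\<in>C\<close> \<open>H\<in>C\<close>] by blast
      then show ?thesis using \<open>(x,a)\<in>G\<close> \<open>(x,b)\<in>H\<close> sub[OF \<open>G\<in>C\<close>] unfolding goodG_def by blast
    qed
  next
    fix x a y b assume "(x,a) \<in> \<Union>C" "(y,b) \<in> \<Union>C"
    then obtain G H where "G\<in>C" "H\<in>C" "(x,a)\<in>G" "(y,b)\<in>H" by auto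
    then show "(x+y,a+b) \<in> \<Union>C"
    proof (cases "G \<subseteq> H")
      case True then have "(x+y,a+b) \<in> H" using \<open>(x,a)\<in>G\<close> \<open>(y,b)\<in>H\<close> sub[OF \<open>H\<in>C\<close>] unfolding goodG_def by blast
      then show ?thesis using \<open>H\<in>C\<close> by blast
    next
      case False then have "H \<subseteq> G" using ch[OF \<open>G\<in>C\<close> \<open>H\<in>C\<close>] by blast
      then have "(x+y,a+b) \<in> G" using \<open>(x,a)\<in>G\<close> \<open>(y,b)\<in>H\<close> sub[OF \<open>G\<in>C\<close>] unfolding goodG_def by blast
      then show ?thesis using \<open>G\<in>C\<close> by blast
    qed
  next
    fix x a c assume "(x,a) \<in> \<Union>C"
    then show "(c*\<^sub>R x, c*a) \<in> \<Union>C" using sub unfolding goodG_def by blast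
  next
    fix x a assume "(x,a) \<in> \<Union>C"
    then show "a \<le> p x" using sub unfolding goodG_def by blast
  next
    show "(0,0) \<in> \<Union>C" using sub assms(2) unfolding goodG_def by blast
  qed
qed

lemma hb_exists:
  fixes p :: "'a::real_vector \<Rightarrow> real"
  assumes sub: "\<And>x y. p (x + y) \<le> p x + p y"
    and hom: "\<And>t x. t > 0 \<Longrightarrow> p (t *\<^sub>R x) \<le> t * p x"
  shows "\<exists>f. linear f \<and> (\<forall>x. f x \<le> p x)"
proof -
  have p0: "0 \<le> p 0" using sub[of 0 0] by simp
  have "\<forall>C\<in>chains {G. goodG p G}. \<exists>U\<in>{G. goodG p G}. \<forall>X\<in>C. X \<subseteq> U"
  proof
    fix C assume C: "C \<in> chains {G. goodG p G}"
    show "\<exists>U\<in>{G. goodG p G}. \<forall>X\<in>C. X \<subseteq> U"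
    proof (cases "C = {}")
      case True
      have "goodG p {(0,0)}" unfolding goodG_def using p0 by auto
      then show ?thesis using True by blast
    next
      case False
      then show ?thesis using goodG_chain[OF C False] by blast
    qed
  qed
  from Zorn_Lemma2[OF this] obtain M where M: "goodG p M"
    and max: "\<And>X. goodG p X \<Longrightarrow> M \<subseteq> X \<Longrightarrow> X = M" by auto
  have funM: "\<And>x a b. (x,a)\<in>M \<Longrightarrow> (x,b)\<in>M \<Longrightarrow> a=b"
   and add: "\<And>x a y b. (x,a)\<in>M \<Longrightarrow> (y,b)\<in>M \<Longrightarrow> (x+y,a+b)\<in>M"
   and scal: "\<And>x a c. (x,a)\<in>M \<Longrightarrow> (c*\<^sub>R x, c*a)\<in>M"
   and dom: "\<And>x a. (x,a)\<in>M \<Longrightarrow> a \<le> p x"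
   and zero: "(0,0)\<in>M" using M unfolding goodG_def by blast+
  have total: "\<exists>a. (z,a) \<in> M" for z
  proof (rule ccontr)
    assume nz: "\<nexists>a. (z, a) \<in> M"
    define S where "S = {b - p (y - z) | y b. (y,b)\<in>M}"
    define s where "s = Sup S"
    have key: "b1 - p (y1 - z) \<le> p (y2 + z) - b2" if "(y1,b1)\<in>M" "(y2,b2)\<in>M" for y1 b1 y2 b2
    proof -
      have "b1 + b2 \<le> p (y1 + y2)" using dom[OF add[OF that]] .
      also have "y1 + y2 = (y1 - z) + (y2 + z)" by simp
      finally show ?thesis using sub[of "y1 - z" "y2 + z"] by linarith
    qed
    have Sne: "S \<noteq> {}" using zero unfolding S_def by blast
    have Sbdd: "bdd_above S" unfolding S_def bdd_above_def using key zero by blast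
    have s_up: "b - p (y - z) \<le> s" if "(y,b)\<in>M" for y b
      unfolding s_def by (rule cSup_upper[OF _ Sbdd]) (use that S_def in blast)
    have s_lo: "s \<le> p (y + z) - b" if "(y,b)\<in>M" for y b
      unfolding s_def by (rule cSup_least[OF Sne]) (use that key S_def in blast)
    define M' where "M' = {(x + t *\<^sub>R z, a + t * s) | x a t. (x,a)\<in>M}"
    have domM: "(x, a) \<in> M \<Longrightarrow> a + t * s \<le> p (x + t *\<^sub>R z)" for x a t
    proof -
      assume xa: "(x,a)\<in>M"
      consider "t = 0" | "t > 0" | "t < 0" by linarith
      then show ?thesis
      proof cases
        case 1 then show ?thesis using dom[OF xa] by simp
      next
        case 2
        have m: "((1/t) *\<^sub>R x, (1/t)*a) \<in> M" using scal[OF xa] .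
        have "s \<le> p ((1/t) *\<^sub>R x + z) - (1/t)*a" using s_lo[OF m] .
        also have "(1/t) *\<^sub>R x + z = (1/t) *\<^sub>R (x + t *\<^sub>R z)" using 2 by (simp add: algebra_simps)
        finally have "s \<le> (1/t) * p (x + t *\<^sub>R z) - (1/t)*a" using hom[of "1/t" "x + t *\<^sub>R z"] 2 by simp
        then have "t * s \<le> t * ((1/t) * p (x + t *\<^sub>R z) - (1/t)*a)" using 2 by (simp add: mult_left_mono)
        then show ?thesis using 2 by (simp add: algebra_simps)
      next
        case 3
        define u where "u = - t"
        have u: "u > 0" using 3 u_def by simp
        have m: "((1/u) *\<^sub>R x, (1/u)*a) \<in> M" using scal[OF xa] .
        have "(1/u)*a - p ((1/u) *\<^sub>R x - z) \<le> s" using s_up[OF m] .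
        moreover have "(1/u) *\<^sub>R x - z = (1/u) *\<^sub>R (x + t *\<^sub>R z)" using u u_def by (simp add: algebra_simps)
        ultimately have "(1/u)*a - (1/u) * p (x + t *\<^sub>R z) \<le> s" using hom[of "1/u" "x + t *\<^sub>R z"] u by simp
        then have "u * ((1/u)*a - (1/u) * p (x + t *\<^sub>R z)) \<le> u * s" using u by (simp add: mult_left_mono)
        then show ?thesis using u u_def by (simp add: algebra_simps)
      qed
    qed
    have gM': "goodG p M'" unfolding goodG_def
    proof (intro conjI allI impI)
      fix w a b assume "(w,a) \<in> M'" "(w,b) \<in> M'"
      then obtain x1 a1 t1 x2 a2 t2 where h: "(x1,a1)\<in>M" "(x2,a2)\<in>M" "w = x1 + t1 *\<^sub>R z" "a = a1 + t1* s"
        "w = x2 + t2 *\<^sub>R z" "b = a2 + t2* s" unfolding M'_def by blast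
      show "a = b"
      proof (cases "t1 = t2")
        case True
        then have "x1 = x2" using h by simp
        then show ?thesis using funM h True by blast
      next
        case False
        have "(x2 + (-1) *\<^sub>R x1, a2 + (-1)*a1) \<in> M" using add[OF h(2) scal[OF h(1)]] .
        then have "((1/(t1-t2)) *\<^sub>R (x2 + (-1) *\<^sub>R x1), (1/(t1-t2))*(a2 + (-1)*a1)) \<in> M" by (rule scal)
        moreover have "(1/(t1-t2)) *\<^sub>R (x2 + (-1) *\<^sub>R x1) = z"
        proof -
          have "x2 - x1 = (t1 - t2) *\<^sub>R z" using h(3,5) by (simp add: algebra_simps)
          then show ?thesis using False by simp
        qed
        ultimately show ?thesis using nz by auto
      qed
    next
      fix w a w' b assume "(w,a) \<in> M'" "(w',b) \<in> M'"
      then obtain x1 a1 t1 x2 a2 t2 where h: "(x1,a1)\<in>M" "(x2,a2)\<in>M" "w = x1 + t1 *\<^sub>R z" "a = a1 + t1* s"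
        "w' = x2 + t2 *\<^sub>R z" "b = a2 + t2* s" unfolding M'_def by blast
      have "(x1 + x2, a1 + a2) \<in> M" using add h by blast
      moreover have "w + w' = (x1 + x2) + (t1 + t2) *\<^sub>R z" "a + b = (a1 + a2) + (t1+t2) * s"
        using h by (simp_all add: algebra_simps)
      ultimately show "(w + w', a + b) \<in> M'" unfolding M'_def by blast
    next
      fix w a c assume "(w,a) \<in> M'"
      then obtain x1 a1 t1 where h: "(x1,a1)\<in>M" "w = x1 + t1 *\<^sub>R z" "a = a1 + t1* s"
        unfolding M'_def by blast
      have "(c *\<^sub>R x1, c * a1) \<in> M" using scal h by blast
      moreover have "c *\<^sub>R w = c *\<^sub>R x1 + (c * t1) *\<^sub>R z" "c * a = c * a1 + (c*t1) * s"
        using h by (simp_all add: algebra_simps)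
      ultimately show "(c *\<^sub>R w, c * a) \<in> M'" unfolding M'_def by blast
    next
      fix w a assume "(w,a) \<in> M'"
      then obtain x1 a1 t1 where h: "(x1,a1)\<in>M" "w = x1 + t1 *\<^sub>R z" "a = a1 + t1* s"
        unfolding M'_def by blast
      then show "a \<le> p w" using domM by simp
    next
      show "(0,0) \<in> M'" unfolding M'_def using zero by force
    qed
    have "M \<subseteq> M'"
    proof
      fix q assume "q \<in> M"
      then obtain x a where "q = (x,a)" "(x,a) \<in> M" by (cases q) auto
      then show "q \<in> M'" unfolding M'_def by force
    qed
    then have "M' = M" using max gM' by blast
    moreover have "(z, s) \<in> M'" unfolding M'_def using zero by force
    ultimately show False using nz by blast
  qed
  define f where "f x = (THE a. (x,a) \<in> M)" for x
  have fM: "(x, f x) \<in> M" for x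
    unfolding f_def using total[of x] funM by (metis theI)
  have feq: "(x, a) \<in> M \<Longrightarrow> f x = a" for x a using fM funM by blast
  have "linear f"
  proof (rule linearI)
    show "f (x + y) = f x + f y" for x y using feq[OF add[OF fM fM]] .
    show "f (c *\<^sub>R x) = c *\<^sub>R f x" for c x using feq[OF scal[OF fM]] by simp
  qed
  moreover have "\<forall>x. f x \<le> p x" using dom fM by blast
  ultimately show ?thesis by blast
qed



lemma sep_zero:
  fixes K :: "'a::real_normed_vector set"
  assumes cvx: "convex K" and dpos: "\<delta> > 0" and Kn: "\<And>k. k\<in>K \<Longrightarrow> \<delta> \<le> norm k"
  shows "\<exists>f. bounded_linear f \<and> (\<forall>k\<in>K. \<delta> \<le> f k)"
proof (cases "K = {}")
  case True
  then show ?thesis using bounded_linear_zero by blast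
next
  case False
  then obtain k0 where k0: "k0 \<in> K" by blast
  define P where "P y = {norm (y + t *\<^sub>R k) - t * \<delta> | t k. t \<ge> 0 \<and> k \<in> K}" for y
  define p where "p y = Inf (P y)" for y
  have PI: "norm (y + t *\<^sub>R k) - t * \<delta> \<in> P y" if "t \<ge> 0" "k \<in> K" for y t k
    unfolding P_def using that by blast
  have PE: "\<exists>t k. t \<ge> 0 \<and> k \<in> K \<and> e = norm (y + t *\<^sub>R k) - t * \<delta>" if "e \<in> P y" for e y
    using that unfolding P_def by auto
  have Pne: "P y \<noteq> {}" for y unfolding P_def using k0 by blast
  have Plow: "- norm y \<le> e" if eP: "e \<in> P y" for y e
  proof -
    obtain t k where tk: "t \<ge> 0" "k \<in> K" "e = norm (y + t *\<^sub>R k) - t * \<delta>"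
      using PE[OF eP] by blast
    have "t * \<delta> \<le> t * norm k" using tk Kn by (simp add: mult_left_mono)
    also have "t * norm k = norm (t *\<^sub>R k)" using tk by simp
    also have "norm (t *\<^sub>R k) \<le> norm (y + t *\<^sub>R k) + norm y"
      by (metis add_diff_cancel_left' norm_triangle_ineq4 add.commute)
    finally show ?thesis using tk by linarith
  qed
  have Pbdd: "bdd_below (P y)" for y unfolding bdd_below_def using Plow by blast
  have plow: "p y \<le> e" if "e \<in> P y" for y e unfolding p_def using cInf_lower[OF that Pbdd] .
  have pgr: "c \<le> p y" if "\<And>e. e \<in> P y \<Longrightarrow> c \<le> e" for c y unfolding p_def
    using cInf_greatest[OF Pne that] .
  have pnorm: "p y \<le> norm y" for y
    using plow[OF PI[of 0 k0 y]] k0 by simp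
  have pk: "p (- k) \<le> - \<delta>" if "k \<in> K" for k
    using plow[OF PI[of 1 k "-k"]] that by simp
  have sub: "p (x + y) \<le> p x + p y" for x y
  proof -
    have main: "p (x + y) \<le> e1 + e2" if e1P: "e1 \<in> P x" and e2P: "e2 \<in> P y" for e1 e2
    proof -
      obtain t1 k1 where 1: "t1 \<ge> 0" "k1 \<in> K" "e1 = norm (x + t1 *\<^sub>R k1) - t1 * \<delta>"
        using PE[OF e1P] by blast
      obtain t2 k2 where 2: "t2 \<ge> 0" "k2 \<in> K" "e2 = norm (y + t2 *\<^sub>R k2) - t2 * \<delta>"
        using PE[OF e2P] by blast
      show ?thesis
      proof (cases "t1 + t2 = 0")
        case True
        then have "t1 = 0" "t2 = 0" using 1 2 by auto
        then have "e1 + e2 = norm x + norm y" using 1 2 by simp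
        moreover have "p (x + y) \<le> norm (x + y)" by (rule pnorm)
        ultimately show ?thesis using norm_triangle_ineq[of x y] by linarith
      next
        case False
        then have tp: "t1 + t2 > 0" using 1 2 by linarith
        define k where "k = (t1/(t1+t2)) *\<^sub>R k1 + (t2/(t1+t2)) *\<^sub>R k2"
        have kK: "k \<in> K" unfolding k_def
          using convexD[OF cvx 1(2) 2(2), of "t1/(t1+t2)" "t2/(t1+t2)"] 1 2 tp
          by (simp add: add_divide_distrib[symmetric])
        have tk: "(t1 + t2) *\<^sub>R k = t1 *\<^sub>R k1 + t2 *\<^sub>R k2"
          unfolding k_def using tp by (simp add: scaleR_add_right)
        have "norm (x + y + (t1+t2) *\<^sub>R k) - (t1+t2) * \<delta> \<in> P (x + y)"
          using PI kK tp by simp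
        then have "p (x + y) \<le> norm (x + y + (t1+t2) *\<^sub>R k) - (t1+t2) * \<delta>" by (rule plow)
        also have "x + y + (t1+t2) *\<^sub>R k = (x + t1 *\<^sub>R k1) + (y + t2 *\<^sub>R k2)"
          using tk by (simp add: algebra_simps)
        finally show ?thesis using 1 2 norm_triangle_ineq[of "x + t1 *\<^sub>R k1" "y + t2 *\<^sub>R k2"]
          by (simp add: algebra_simps)
      qed
    qed
    have "p (x + y) - e2 \<le> p x" if "e2 \<in> P y" for e2
    proof (rule pgr)
      fix e1 assume "e1 \<in> P x"
      then show "p (x + y) - e2 \<le> e1" using main[OF _ that] by fastforce
    qed
    then have "p (x + y) - p x \<le> p y" by (intro pgr) fastforce
    then show ?thesis by linarith
  qed
  have hom: "p (t *\<^sub>R x) \<le> t * p x" if tpos: "t > 0" for t x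
  proof -
    have "p (t *\<^sub>R x) / t \<le> e" if eP: "e \<in> P x" for e
    proof -
      obtain s k where sk: "s \<ge> 0" "k \<in> K" "e = norm (x + s *\<^sub>R k) - s * \<delta>"
        using PE[OF eP] by blast
      have "norm (t *\<^sub>R x + (t * s) *\<^sub>R k) - (t * s) * \<delta> \<in> P (t *\<^sub>R x)"
        using PI sk tpos by simp
      then have "p (t *\<^sub>R x) \<le> norm (t *\<^sub>R x + (t * s) *\<^sub>R k) - (t * s) * \<delta>" by (rule plow)
      also have "t *\<^sub>R x + (t * s) *\<^sub>R k = t *\<^sub>R (x + s *\<^sub>R k)" by (simp add: algebra_simps)
      also have "norm (t *\<^sub>R (x + s *\<^sub>R k)) - (t * s) * \<delta> = t * e"
      proof -
        have aux: "\<And>N::real. t * N - (t * s) * \<delta> = t * (N - s * \<delta>)" by (simp add: algebra_simps)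
        show ?thesis unfolding norm_scaleR abs_of_pos[OF tpos] sk(3) by (rule aux)
      qed
      finally show ?thesis using tpos by (simp add: divide_simps mult.commute)
    qed
    then have "p (t *\<^sub>R x) / t \<le> p x" using pgr by blast
    then show ?thesis using tpos by (simp add: divide_simps mult.commute)
  qed
  obtain f where lf: "linear f" and fp: "\<And>x. f x \<le> p x" using hb_exists[of p, OF sub hom] by blast
  have fadd: "f (x + y) = f x + f y" and fsc: "f (c *\<^sub>R x) = c *\<^sub>R f x" for x y c
    using lf unfolding linear_iff by blast+
  have fneg: "f (- x) = - f x" for x using fsc[of "-1" x] by simp
  have "bounded_linear f"
  proof (rule bounded_linear_intro[OF fadd fsc])
    fix x
    have "f x \<le> norm x" using fp[of x] pnorm[of x] by linarith
    moreover have "- f x \<le> norm x" using fp[of "-x"] pnorm[of "-x"] fneg[of x] by simp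
    ultimately show "norm (f x) \<le> norm x * 1" by simp
  qed
  moreover have "\<forall>k\<in>K. \<delta> \<le> f k"
  proof
    fix k assume "k \<in> K"
    then show "\<delta> \<le> f k" using fp[of "-k"] pk[of k] fneg[of k] by linarith
  qed
  ultimately show ?thesis by blast
qed

lemma sep_point:
  fixes A :: "'a::real_normed_vector set"
  assumes "closed A" "convex A" "A \<noteq> {}" "x \<notin> A"
  shows "\<exists>(f::'a \<Rightarrow> real) \<delta>. bounded_linear f \<and> \<delta> > 0 \<and> (\<forall>a\<in>A. f x + \<delta> \<le> f a)"
proof -
  define \<delta> where "\<delta> = infdist x A"
  have dpos: "\<delta> > 0" unfolding \<delta>_def using infdist_pos_not_in_closed assms by blast
  have "\<delta> \<le> norm k" if kin: "k \<in> (\<lambda>b. b - x) ` A" for k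
  proof -
    obtain a where "a \<in> A" "k = a - x" using kin by blast
    then show ?thesis unfolding \<delta>_def using infdist_le[of a A x]
      by (simp add: dist_norm norm_minus_commute)
  qed
  then obtain f where f: "bounded_linear f" "\<forall>k\<in>(\<lambda>b. b - x) ` A. \<delta> \<le> f k"
    using sep_zero[OF convex_translation_subtract[OF assms(2)] dpos] by blast
  have "\<forall>a\<in>A. f x + \<delta> \<le> f a"
  proof
    fix a assume "a \<in> A"
    then have "\<delta> \<le> f (a - x)" using f(2) by blast
    then show "f x + \<delta> \<le> f a" using linear_diff[OF bounded_linear.linear[OF f(1)]] by simp
  qed
  then show ?thesis using f(1) dpos by blast
qed



lemma existence_closed:
  assumes "existence_set S" shows "closed S"
proof -
  have "y \<in> S" if y: "y \<in> closure S" for y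
  proof -
    from assms obtain d where d: "d \<in> S" "\<And>c. c \<in> S \<Longrightarrow> norm (d - c) \<le> norm (y - c)"
      unfolding existence_set_def R_set_def by blast
    have "norm (d - y) < e" if e: "e > 0" for e
    proof -
      obtain c where c: "c \<in> S" "dist c y < e/2" using y e closure_approachable[of y S]
        by (metis half_gt_zero)
      have "norm (d - y) \<le> norm (d - c) + norm (c - y)" using norm_triangle_ineq[of "d - c" "c - y"] by simp
      also have "\<dots> \<le> 2 * norm (y - c)" using d(2)[OF c(1)] by (simp add: norm_minus_commute)
      also have "\<dots> < e" using c(2) by (simp add: dist_norm norm_minus_commute)
      finally show ?thesis .
    qed
    then have "d = y"
      by (metis dual_order.strict_iff_not eq_iff_diff_eq_0 norm_not_less_zero zero_less_norm_iff)
    then show ?thesis using d by simp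
  qed
  then show ?thesis using closure_subset_eq by blast
qed

lemma cluster_closed:
  assumes "inf (nhds L) G \<noteq> bot" "closed S" "eventually (\<lambda>g. g \<in> S) G"
  shows "L \<in> S"
proof (rule ccontr)
  assume "L \<notin> S"
  then have "eventually (\<lambda>g. g \<in> - S) (nhds L)"
    using assms(2) by (intro eventually_nhds_in_open) auto
  then have "eventually (\<lambda>g. False) (inf (nhds L) G)"
    unfolding eventually_inf using assms(3) by blast
  then show False using assms(1) by (simp add: eventually_False)
qed

theorem lemma15:
  fixes F :: "'t \<Rightarrow> 'a::banach set" and T :: "'t set"
  assumes "reflexive_space TYPE('a)"
    and "T \<noteq> {}"
    and "\<And>t. t \<in> T \<Longrightarrow> convex (F t)"
    and "\<And>t. t \<in> T \<Longrightarrow> existence_set (F t)"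
    and "\<And>t1 t2. t1 \<in> T \<Longrightarrow> t2 \<in> T \<Longrightarrow> \<exists>t3\<in>T. F t3 \<subseteq> F t1 \<inter> F t2"
    and "(\<Inter>t\<in>T. F t) \<noteq> {}"
  shows "existence_set (\<Inter>t\<in>T. F t)"
proof -
  note rfl = assms(1) and Tne = assms(2) and cvx = assms(3) and ex = assms(4)
    and dir = assms(5) and F0ne = assms(6)
  define F0 where "F0 = (\<Inter>t\<in>T. F t)"
  obtain c0 where c0: "c0 \<in> F0" using F0ne unfolding F0_def by blast
  have "R_set F0 x \<noteq> {}" for x
  proof -
    define B where "B = {y. \<forall>c\<in>F0. norm (y - c) \<le> norm (x - c)}"
    define A where "A t = F t \<inter> B" for t
    define Mb where "Mb = norm c0 + norm (x - c0)"
    have Bcl: "closed B"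
    proof -
      have "B = (\<Inter>c\<in>F0. cball c (norm (x - c)))"
        unfolding B_def by (auto simp: dist_norm norm_minus_commute)
      then show ?thesis by auto
    qed
    have Bcv: "convex B"
    proof -
      have "B = (\<Inter>c\<in>F0. cball c (norm (x - c)))"
        unfolding B_def by (auto simp: dist_norm norm_minus_commute)
      then show ?thesis by (auto intro!: convex_INT)
    qed
    have Acl: "closed (A t)" if "t \<in> T" for t
      unfolding A_def using existence_closed[OF ex[OF that]] Bcl by auto
    have Acv: "convex (A t)" if "t \<in> T" for t
      unfolding A_def using cvx[OF that] Bcv by (rule convex_Int)
    have Ane: "A t \<noteq> {}" if tT: "t \<in> T" for t
    proof -
      obtain d where d: "d \<in> F t" "\<And>c. c \<in> F t \<Longrightarrow> norm (d - c) \<le> norm (x - c)"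
        using ex[OF tT] unfolding existence_set_def R_set_def by blast
      have "d \<in> B" unfolding B_def using d(2) tT unfolding F0_def by blast
      then show ?thesis using d(1) unfolding A_def by blast
    qed
    have Abd: "norm y \<le> Mb" if "y \<in> A t" for y t
    proof -
      have "norm (y - c0) \<le> norm (x - c0)" using that c0 unfolding A_def B_def by blast
      then show ?thesis unfolding Mb_def using norm_triangle_sub[of y c0] by linarith
    qed
    have Amono: "A s \<subseteq> A t" if "F s \<subseteq> F t" for s t
      using that unfolding A_def by blast
    define D where "D = (INF t\<in>T. principal {s\<in>T. F s \<subseteq> F t})"
    have Ddir: "\<exists>k\<in>T. principal {s\<in>T. F s \<subseteq> F k} \<le> inf (principal {s\<in>T. F s \<subseteq> F i}) (principal {s\<in>T. F s \<subseteq> F j})"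
      if ij: "i \<in> T" "j \<in> T" for i j
    proof -
      obtain k where "k \<in> T" "F k \<subseteq> F i \<inter> F j" using dir[OF ij] by blast
      then show ?thesis by (intro bexI[of _ k]) auto
    qed
    have evD: "eventually P D \<longleftrightarrow> (\<exists>t\<in>T. \<forall>s\<in>T. F s \<subseteq> F t \<longrightarrow> P s)" for P
      unfolding D_def by (subst eventually_INF_base[OF Tne Ddir]) (auto simp: eventually_principal)
    have Dnb: "D \<noteq> bot"
    proof
      assume "D = bot"
      then have "eventually (\<lambda>_. False) D" by simp
      then show False unfolding evD by blast
    qed
    define xs where "xs t = (SOME y. y \<in> A t)" for t
    have xsA: "xs t \<in> A t" if "t \<in> T" for t
      unfolding xs_def using Ane[OF that] by (simp add: some_in_eq)
    define \<Phi> where "\<Phi> t = (\<lambda>f::'a \<Rightarrow>\<^sub>L real. blinfun_apply f (xs t))" for t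
    define G where "G = filtermap \<Phi> D"
    have Gnb: "G \<noteq> bot" unfolding G_def using Dnb by (simp add: filtermap_bot_iff)
    have evG: "eventually P G" if "\<And>t. t \<in> T \<Longrightarrow> P (\<Phi> t)" for P
      unfolding G_def eventually_filtermap evD using Tne that by blast
    define Kc where "Kc = PiE UNIV (\<lambda>f::'a \<Rightarrow>\<^sub>L real. cball (0::real) (Mb * norm f))"
    have Kcc: "compact Kc"
    proof -
      have "compactin (product_topology (\<lambda>i. euclidean) UNIV) Kc"
        unfolding Kc_def compactin_PiE by auto
      then show ?thesis by (simp add: euclidean_product_topology)
    qed
    have inKc: "g \<in> Kc \<longleftrightarrow> (\<forall>f. \<bar>g f\<bar> \<le> Mb * norm f)" for g
      unfolding Kc_def by (auto simp: PiE_def)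
    have "eventually (\<lambda>g. g \<in> Kc) G"
    proof (rule evG)
      fix t assume t: "t \<in> T"
      have "\<bar>blinfun_apply f (xs t)\<bar> \<le> Mb * norm f" for f
      proof -
        have "\<bar>blinfun_apply f (xs t)\<bar> \<le> norm f * norm (xs t)" using norm_blinfun[of f "xs t"] by simp
        also have "\<dots> \<le> norm f * Mb" using Abd[OF xsA[OF t]] by (simp add: mult_left_mono)
        finally show ?thesis by (simp add: mult.commute)
      qed
      then show "\<Phi> t \<in> Kc" unfolding inKc \<Phi>_def by blast
    qed
    then obtain L where LK: "L \<in> Kc" and Lcl: "inf (nhds L) G \<noteq> bot"
      using Kcc Gnb unfolding compact_filter by blast
    have Ladd: "L (f1 + f2) = L f1 + L f2" for f1 f2
    proof -
      have "L \<in> {g. g (f1 + f2) = g f1 + g f2}"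
      proof (rule cluster_closed[OF Lcl])
        show "closed {g::('a \<Rightarrow>\<^sub>L real) \<Rightarrow> real. g (f1 + f2) = g f1 + g f2}"
          by (intro closed_Collect_eq continuous_intros continuous_on_product_coordinates)
        show "eventually (\<lambda>g. g \<in> {g. g (f1 + f2) = g f1 + g f2}) G"
          by (rule evG) (simp add: \<Phi>_def blinfun.add_left)
      qed
      then show ?thesis by simp
    qed
    have Lsc: "L (r *\<^sub>R f) = r *\<^sub>R L f" for r f
    proof -
      have "L \<in> {g. g (r *\<^sub>R f) = r * g f}"
      proof (rule cluster_closed[OF Lcl])
        show "closed {g::('a \<Rightarrow>\<^sub>L real) \<Rightarrow> real. g (r *\<^sub>R f) = r * g f}"
          by (intro closed_Collect_eq continuous_intros continuous_on_product_coordinates)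
        show "eventually (\<lambda>g. g \<in> {g. g (r *\<^sub>R f) = r * g f}) G"
          by (rule evG) (simp add: \<Phi>_def blinfun.scaleR_left)
      qed
      then show ?thesis by simp
    qed
    have "bounded_linear L"
    proof (rule bounded_linear_intro[OF Ladd Lsc])
      show "norm (L f) \<le> norm f * Mb" for f using LK unfolding inKc by (simp add: mult.commute)
    qed
    then obtain y where y: "\<And>f. L f = blinfun_apply f y"
      using rfl unfolding reflexive_space_def
      by (metis bounded_linear_Blinfun_apply)
    have yA: "y \<in> A t" if t: "t \<in> T" for t
    proof (rule ccontr)
      assume yn: "y \<notin> A t"
      obtain h :: "'a \<Rightarrow> real" and \<delta> :: real where h: "bounded_linear h" "\<delta> > 0" "\<forall>a\<in>A t. h y + \<delta> \<le> h a"
        using sep_point[OF Acl[OF t] Acv[OF t] Ane[OF t] yn] by blast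
      define hb where "hb = Blinfun h"
      have hb: "blinfun_apply hb = h" unfolding hb_def using h(1) by (rule bounded_linear_Blinfun_apply)
      have "L \<in> {g. h y + \<delta> \<le> g hb}"
      proof (rule cluster_closed[OF Lcl])
        show "closed {g::('a \<Rightarrow>\<^sub>L real) \<Rightarrow> real. h y + \<delta> \<le> g hb}"
          by (intro closed_Collect_le continuous_intros continuous_on_product_coordinates)
        have "eventually (\<lambda>s. \<Phi> s \<in> {g. h y + \<delta> \<le> g hb}) D"
          unfolding evD
        proof (intro bexI[OF _ t] ballI impI)
          fix s assume "s \<in> T" "F s \<subseteq> F t"
          then have "xs s \<in> A t" using xsA Amono by blast
          then show "\<Phi> s \<in> {g. h y + \<delta> \<le> g hb}" using h(3) by (simp add: \<Phi>_def hb)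
        qed
        then show "eventually (\<lambda>g. g \<in> {g. h y + \<delta> \<le> g hb}) G"
          unfolding G_def eventually_filtermap by (simp add: comp_def)
      qed
      then have "h y + \<delta> \<le> h y" using y[of hb] hb by simp
      then show False using h(2) by simp
    qed
    have "y \<in> F0" unfolding F0_def using yA unfolding A_def by blast
    moreover have "y \<in> B" using yA Tne unfolding A_def by blast
    ultimately show ?thesis unfolding R_set_def B_def by blast
  qed
  then show ?thesis unfolding existence_set_def F0_def[symmetric] using c0 by blast
qed

end
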